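(* Let $\mathbb{F}$ be a field of characteristic not $2$. For every $\rho\in D$, the linear map $\phi_\rho:\hat{\mathcal{H}}\to\hat{\mathcal{H}}$ defined by $a_i\mapsto a_{i^\rho}$, $s_j\mapsto s_j$, $p_{\bar r,k}\mapsto \mathrm{sgn}(\rho)\,p_{\overline{r^\rho},k}$ is an automorphism of $\hat{\mathcal{H}}$, and the map $\rho\mapsto\phi_\rho$ is a faithful representation of $D$ as a group of automorphisms of $\hat{\mathcal{H}}$.
   Context: Notation: $\mathbb{N}=\{1,2,3,\dots\}$, $3\mathbb{N}=\{3,6,9,\dots\}$; for $r\in\mathbb{Z}$, $\bar r=r+3\mathbb{Z}\in\mathbb{Z}_3$. The algebra $\hat{\mathcal{H}}$ is the commutative $\mathbb{F}$-algebra with basis $\{a_i:i\in\mathbb{Z}\}\cup\{s_j:j\in\mathbb{N}\}\cup\{p_{\bar r,k}:\bar r\in\{\bar1,\bar2\},\ k\in 3\mathbb{N}\}$, where $s_0=0$, $p_{\bar r,j}=0$ for all $\bar r$ whenever $j\notin 3\mathbb{N}$, $p_{\bar 0,j}=-p_{\bar1,j}-p_{\bar2,j}$, $z_{\bar r,j}=p_{\bar r+\bar1,j}-p_{\bar r-\bar1,j}$, and for $i,i'\in\mathbb{Z}$, $j,l\in\mathbb{N}$, $h,k\in3\mathbb{N}$, $\bar r,\bar t\in\mathbb{Z}_3$: (H1) $a_ia_{i'}=\tfrac12(a_i+a_{i'})+s_{|i-i'|}+z_{\bar\imath,|i-i'|}$; (H2) $a_is_j=-\tfrac34a_i+\tfrac38(a_{i-j}+a_{i+j})+\tfrac32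 s_j-z_{\bar\imath,j}$; (H3) $a_ip_{\bar r,k}=\tfrac32p_{\bar r,k}-p_{-(\bar\imath+\bar r),k}$; (H4) $s_js_l=\tfrac34(s_j+s_l)-\tfrac38(s_{|j-l|}+s_{j+l})$; (H5) $s_jp_{\bar r,k}=\tfrac34(p_{\bar r,j}+p_{\bar r,k})-\tfrac38(p_{\bar r,|j-k|}+p_{\bar r,j+k})$; (H6) $p_{\bar r,h}p_{\bar t,k}=\tfrac14(z_{-(\bar r+\bar t),h}+z_{-(\bar r+\bar t),k})-\tfrac18(z_{-(\bar r+\bar t),|h-k|}+z_{-(\bar r+\bar t),h+k})$. For $k\in\tfrac12\mathbb{Z}$ let $\tau_k:\mathbb{Z}\to\mathbb{Z}$, $i\mapsto 2k-i$. Let $D=\langle\tau_0,\tau_{1/2}\rangle$ (the infinite dihedral group acting on $\mathbb{Z}$; its elements are the translations and the reflections $\tau_k$), and $\mathrm{sgn}:D\to\{\pm1\}$ with $\mathrm{sgn}(\rho)=-1$ for reflections and $1$ for translations. Write $i^\rho$ for the image of $i$ under $\rho$; for $\bar r\in\mathbb{Z}_3$ with representative $r$, $\overline{r^\rho}$ is well defined. *)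

theory Defs
  imports Main
begin

text \<open>Basis labels: IA i = a_i (i in Z), IS j = s_j (j >= 1),
  IP r k = p_{r,k} (r in {1,2} as representative of the residue, k in 3N).\<close>
datatype idx = IA int | IS nat | IP int nat

definition valid_idx :: "idx \<Rightarrow> bool" where
  "valid_idx x = (case x of IA i \<Rightarrow> True
                 | IS j \<Rightarrow> j \<ge> 1
                 | IP r k \<Rightarrow> (r = 1 \<or> r = 2) \<and> k \<ge> 1 \<and> 3 dvd k)"

definition supp :: "(idx \<Rightarrow> 'a::zero) \<Rightarrow> idx set" where
  "supp f = {x. f x \<noteq> 0}"

definition Hcarrier :: "(idx \<Rightarrow> 'a::field) set" where
  "Hcarrier = {f. finite (supp f) \<and> (\<forall>x. f x \<noteq> 0 \<longrightarrow> valid_idx x)}"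

definition vadd :: "(idx \<Rightarrow> 'a::field) \<Rightarrow> (idx \<Rightarrow> 'a) \<Rightarrow> idx \<Rightarrow> 'a" where
  "vadd f g = (\<lambda>y. f y + g y)"

definition vsc :: "'a::field \<Rightarrow> (idx \<Rightarrow> 'a) \<Rightarrow> idx \<Rightarrow> 'a" where
  "vsc c f = (\<lambda>y. c * f y)"

definition bvec :: "idx \<Rightarrow> idx \<Rightarrow> 'a::field" where
  "bvec x = (\<lambda>y. if y = x then 1 else 0)"

definition ael :: "int \<Rightarrow> idx \<Rightarrow> 'a::field" where
  "ael i = bvec (IA i)"

definition sel :: "nat \<Rightarrow> idx \<Rightarrow> 'a::field" where
  "sel j = (if j = 0 then (\<lambda>_. 0) else bvec (IS j))"

text \<open>p_{r,j} for any residue class (given by any integer representative r) and any j: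
  zero unless j in 3N; p_{0,j} = - p_{1,j} - p_{2,j}.\<close>
definition pel :: "int \<Rightarrow> nat \<Rightarrow> idx \<Rightarrow> 'a::field" where
  "pel r j = (if \<not> (j \<ge> 1 \<and> 3 dvd j) then (\<lambda>_. 0)
              else if r mod 3 = 1 then bvec (IP 1 j)
              else if r mod 3 = 2 then bvec (IP 2 j)
              else (\<lambda>y. - bvec (IP 1 j) y - bvec (IP 2 j) y))"

definition zel :: "int \<Rightarrow> nat \<Rightarrow> idx \<Rightarrow> 'a::field" where
  "zel r j = (\<lambda>y. pel (r + 1) j y - pel (r - 1) j y)"

text \<open>Products of basis elements, following (H1)--(H6) (both orders for mixed products).\<close>
fun bprod :: "idx \<Rightarrow> idx \<Rightarrow> idx \<Rightarrow> 'a::field" where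
  "bprod (IA i) (IA i') = (\<lambda>y. (1/2) * (ael i y + ael i' y) + sel (nat \<bar>i - i'\<bar>) y
                                + zel i (nat \<bar>i - i'\<bar>) y)"
| "bprod (IA i) (IS j) = (\<lambda>y. - (3/4) * ael i y + (3/8) * (ael (i - int j) y + ael (i + int j) y)
                                + (3/2) * sel j y - zel i j y)"
| "bprod (IS j) (IA i) = (\<lambda>y. - (3/4) * ael i y + (3/8) * (ael (i - int j) y + ael (i + int j) y)
                                + (3/2) * sel j y - zel i j y)"
| "bprod (IA i) (IP r k) = (\<lambda>y. (3/2) * pel r k y - pel (- (i + r)) k y)"
| "bprod (IP r k) (IA i) = (\<lambda>y. (3/2) * pel r k y - pel (- (i + r)) k y)"
| "bprod (IS j) (IS l) = (\<lambda>y. (3/4) * (sel j y + sel l y)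
                                - (3/8) * (sel (nat \<bar>int j - int l\<bar>) y + sel (j + l) y))"
| "bprod (IS j) (IP r k) = (\<lambda>y. (3/4) * (pel r j y + pel r k y)
                                - (3/8) * (pel r (nat \<bar>int j - int k\<bar>) y + pel r (j + k) y))"
| "bprod (IP r k) (IS j) = (\<lambda>y. (3/4) * (pel r j y + pel r k y)
                                - (3/8) * (pel r (nat \<bar>int j - int k\<bar>) y + pel r (j + k) y))"
| "bprod (IP r h) (IP t k) = (\<lambda>y. (1/4) * (zel (- (r + t)) h y + zel (- (r + t)) k y)
                                - (1/8) * (zel (- (r + t)) (nat \<bar>int h - int k\<bar>) y
                                           + zel (- (r + t)) (h + k) y))"

definition hmult :: "(idx \<Rightarrow> 'a::field) \<Rightarrow> (idx \<Rightarrow> 'a) \<Rightarrow> idx \<Rightarrow> 'a" where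
  "hmult f g = (\<lambda>y. \<Sum>x\<in>supp f. \<Sum>x'\<in>supp g. f x * g x' * bprod x x' y)"

text \<open>tau_k for k in (1/2)Z, parametrised by m = 2k in Z: i |-> m - i.\<close>
definition refl_m :: "int \<Rightarrow> int \<Rightarrow> int" where
  "refl_m m = (\<lambda>i. m - i)"

text \<open>D = <tau_0, tau_{1/2}>; as both generators are involutions, the generated
  group equals the generated monoid under composition.\<close>
inductive_set Dinf :: "(int \<Rightarrow> int) set" where
  D_id: "id \<in> Dinf"
| D_t0: "\<rho> \<in> Dinf \<Longrightarrow> refl_m 0 \<circ> \<rho> \<in> Dinf"
| D_t12: "\<rho> \<in> Dinf \<Longrightarrow> refl_m 1 \<circ> \<rho> \<in> Dinf"

definition dsgn :: "(int \<Rightarrow> int) \<Rightarrow> 'a::field" where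
  "dsgn \<rho> = (if \<exists>m. \<rho> = refl_m m then -1 else 1)"

definition phib :: "(int \<Rightarrow> int) \<Rightarrow> idx \<Rightarrow> idx \<Rightarrow> 'a::field" where
  "phib \<rho> x = (case x of IA i \<Rightarrow> ael (\<rho> i)
               | IS j \<Rightarrow> sel j
               | IP r k \<Rightarrow> vsc (dsgn \<rho>) (pel (\<rho> r) k))"

definition phi :: "(int \<Rightarrow> int) \<Rightarrow> (idx \<Rightarrow> 'a::field) \<Rightarrow> idx \<Rightarrow> 'a" where
  "phi \<rho> f = (\<lambda>y. \<Sum>x\<in>supp f. f x * phib \<rho> x y)"

definition is_hat_aut :: "((idx \<Rightarrow> 'a::field) \<Rightarrow> idx \<Rightarrow> 'a) \<Rightarrow> bool" where
  "is_hat_aut \<phi> =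
     (bij_betw \<phi> Hcarrier Hcarrier
      \<and> (\<forall>f\<in>Hcarrier. \<forall>g\<in>Hcarrier. \<phi> (vadd f g) = vadd (\<phi> f) (\<phi> g))
      \<and> (\<forall>c. \<forall>f\<in>Hcarrier. \<phi> (vsc c f) = vsc c (\<phi> f))
      \<and> (\<forall>f\<in>Hcarrier. \<forall>g\<in>Hcarrier. \<phi> (hmult f g) = hmult (\<phi> f) (\<phi> g)))"

end

theory Submission
  imports Defs
begin

definition fin :: "(idx \<Rightarrow> 'a::field) \<Rightarrow> bool" where
  "fin f \<longleftrightarrow> finite (supp f)"

lemma fin_zero[simp,intro]: "fin (\<lambda>y. 0)"
  by (simp add: fin_def supp_def)

lemma fin_add[simp,intro]: "fin f \<Longrightarrow> fin g \<Longrightarrow> fin (\<lambda>y. f y + g y)"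
  unfolding fin_def by (rule finite_subset[of _ "supp f \<union> supp g"]) (auto simp: supp_def)

lemma fin_diff[simp,intro]: "fin f \<Longrightarrow> fin g \<Longrightarrow> fin (\<lambda>y. f y - g y)"
  unfolding fin_def by (rule finite_subset[of _ "supp f \<union> supp g"]) (auto simp: supp_def)

lemma fin_uminus[simp,intro]: "fin f \<Longrightarrow> fin (\<lambda>y. - f y)"
  unfolding fin_def by (rule finite_subset[of _ "supp f"]) (auto simp: supp_def)

lemma fin_scale[simp,intro]: "fin f \<Longrightarrow> fin (\<lambda>y. c * f y)"
  unfolding fin_def by (rule finite_subset[of _ "supp f"]) (auto simp: supp_def)

lemma fin_divide[simp,intro]: "fin f \<Longrightarrow> fin (\<lambda>y. f y / c)"
  unfolding fin_def by (rule finite_subset[of _ "supp f"]) (auto simp: supp_def)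

lemma fin_sum[intro]: "finite S \<Longrightarrow> (\<And>x. x \<in> S \<Longrightarrow> fin (u x)) \<Longrightarrow> fin (\<lambda>y. \<Sum>x\<in>S. u x y)"
  unfolding fin_def
  apply (rule finite_subset[of _ "\<Union>x\<in>S. supp (u x)"])
  by (auto simp: supp_def intro: sum.neutral)

lemma supp_bvec[simp]: "supp (bvec x :: idx \<Rightarrow> 'a::field) = {x}"
  by (auto simp: supp_def bvec_def)

lemma fin_bvec[simp,intro]: "fin (bvec x)"
  by (simp add: fin_def)

lemma fin_ael[simp,intro]: "fin (ael i)" by (simp add: ael_def)
lemma fin_sel[simp,intro]: "fin (sel j)" by (simp add: sel_def)
lemma fin_pel[simp,intro]: "fin (pel r j)" by (simp add: pel_def)
lemma fin_zel[simp,intro]: "fin (zel r j)" by (simp add: zel_def)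
lemma fin_bprod[simp,intro]: "fin (bprod x x')"
  by (cases x; cases x'; simp only: bprod.simps; intro fin_add fin_diff fin_scale fin_uminus fin_ael fin_sel fin_zel fin_pel)

definition linop :: "((idx \<Rightarrow> 'a::field) \<Rightarrow> idx \<Rightarrow> 'a) \<Rightarrow> bool" where
  "linop F \<longleftrightarrow> (\<forall>f g. fin f \<longrightarrow> fin g \<longrightarrow> F (\<lambda>y. f y + g y) = (\<lambda>y. F f y + F g y))
             \<and> (\<forall>c f. fin f \<longrightarrow> F (\<lambda>y. c * f y) = (\<lambda>y. c * F f y))"

lemma linop_add: "linop F \<Longrightarrow> fin f \<Longrightarrow> fin g \<Longrightarrow> F (\<lambda>y. f y + g y) = (\<lambda>y. F f y + F g y)"
  by (simp add: linop_def)

lemma linop_scale: "linop F \<Longrightarrow> fin f \<Longrightarrow> F (\<lambda>y. c * f y) = (\<lambda>y. c * F f y)"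
  by (simp add: linop_def)

lemma linop_zero: assumes "linop F" shows "F (\<lambda>y. 0) = (\<lambda>y. 0)"
proof -
  have "F (\<lambda>y. 0 * (\<lambda>y. 0::'a) y) = (\<lambda>y. 0 * F (\<lambda>y. 0) y)"
    by (rule linop_scale[OF assms fin_zero])
  thus ?thesis by simp
qed

lemma linop_minus: assumes "linop F" "fin f" shows "F (\<lambda>y. - f y) = (\<lambda>y. - F f y)"
proof -
  have "F (\<lambda>y. (-1) * f y) = (\<lambda>y. (-1) * F f y)"
    by (rule linop_scale[OF assms])
  thus ?thesis by simp
qed

lemma linop_diff: assumes "linop F" "fin f" "fin g"
  shows "F (\<lambda>y. f y - g y) = (\<lambda>y. F f y - F g y)"
proof -
  have "F (\<lambda>y. f y + (\<lambda>y. - g y) y) = (\<lambda>y. F f y + F (\<lambda>y. - g y) y)"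
    by (rule linop_add[OF assms(1,2)]) (use assms in auto)
  thus ?thesis using linop_minus[OF assms(1,3)] by simp
qed

lemma linop_sum: assumes "linop F" "finite S" "\<And>x. x \<in> S \<Longrightarrow> fin (u x)"
  shows "F (\<lambda>y. \<Sum>x\<in>S. u x y) = (\<lambda>y. \<Sum>x\<in>S. F (u x) y)"
  using assms(2,3)
proof (induction S rule: finite_induct)
  case empty
  then show ?case using linop_zero[OF assms(1)] by simp
next
  case (insert a S)
  have "F (\<lambda>y. \<Sum>x\<in>insert a S. u x y) = F (\<lambda>y. u a y + (\<lambda>y. \<Sum>x\<in>S. u x y) y)"
    using insert by simp
  also have "\<dots> = (\<lambda>y. F (u a) y + F (\<lambda>y. \<Sum>x\<in>S. u x y) y)"
    by (rule linop_add[OF assms(1)]) (use insert in auto)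
  finally show ?case using insert by simp
qed

lemma phi_eq: assumes "finite S" "supp f \<subseteq> S"
  shows "phi \<rho> f = (\<lambda>y. \<Sum>x\<in>S. f x * phib \<rho> x y)"
  unfolding phi_def
  apply (rule ext)
  apply (rule sum.mono_neutral_left[OF assms(1,2)])
  by (auto simp: supp_def)

lemma linop_phi: "linop (phi \<rho>)"
  unfolding linop_def
proof (intro allI impI conjI)
  fix f g :: "idx \<Rightarrow> 'a" assume f: "fin f" and g: "fin g"
  let ?S = "supp f \<union> supp g"
  have fS: "finite ?S" using f g by (simp add: fin_def)
  have "phi \<rho> (\<lambda>y. f y + g y) = (\<lambda>y. \<Sum>x\<in>?S. (f x + g x) * phib \<rho> x y)"
    by (rule phi_eq[OF fS]) (auto simp: supp_def)
  moreover have "phi \<rho> f = (\<lambda>y. \<Sum>x\<in>?S. f x * phib \<rho> x y)"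
    by (rule phi_eq[OF fS]) auto
  moreover have "phi \<rho> g = (\<lambda>y. \<Sum>x\<in>?S. g x * phib \<rho> x y)"
    by (rule phi_eq[OF fS]) auto
  ultimately show "phi \<rho> (\<lambda>y. f y + g y) = (\<lambda>y. phi \<rho> f y + phi \<rho> g y)"
    by (simp add: distrib_right sum.distrib)
next
  fix c and f :: "idx \<Rightarrow> 'a" assume f: "fin f"
  have fS: "finite (supp f)" using f by (simp add: fin_def)
  have "phi \<rho> (\<lambda>y. c * f y) = (\<lambda>y. \<Sum>x\<in>supp f. (c * f x) * phib \<rho> x y)"
    by (rule phi_eq[OF fS]) (auto simp: supp_def)
  moreover have "phi \<rho> f = (\<lambda>y. \<Sum>x\<in>supp f. f x * phib \<rho> x y)"
    by (rule phi_eq[OF fS]) auto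
  ultimately show "phi \<rho> (\<lambda>y. c * f y) = (\<lambda>y. c * phi \<rho> f y)"
    by (simp add: sum_distrib_left mult.assoc)
qed

lemma hmult_eq: assumes "finite S" "supp f \<subseteq> S" "finite T" "supp g \<subseteq> T"
  shows "hmult f g = (\<lambda>y. \<Sum>x\<in>S. \<Sum>x'\<in>T. f x * g x' * bprod x x' y)"
  unfolding hmult_def
proof (rule ext)
  fix y
  have "(\<Sum>x\<in>supp f. \<Sum>x'\<in>supp g. f x * g x' * bprod x x' y)
      = (\<Sum>x\<in>supp f. \<Sum>x'\<in>T. f x * g x' * bprod x x' y)"
    by (rule sum.cong[OF refl], rule sum.mono_neutral_left[OF assms(3,4)]) (auto simp: supp_def)
  also have "\<dots> = (\<Sum>x\<in>S. \<Sum>x'\<in>T. f x * g x' * bprod x x' y)"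
    by (rule sum.mono_neutral_left[OF assms(1,2)]) (auto simp: supp_def)
  finally show "(\<Sum>x\<in>supp f. \<Sum>x'\<in>supp g. f x * g x' * bprod x x' y)
      = (\<Sum>x\<in>S. \<Sum>x'\<in>T. f x * g x' * bprod x x' y)" .
qed

lemma linop_hmult_left: assumes g: "fin g" shows "linop (\<lambda>f. hmult f g)"
  unfolding linop_def
proof (intro allI impI conjI)
  fix f f' :: "idx \<Rightarrow> 'a" assume f: "fin f" and f': "fin f'"
  let ?S = "supp f \<union> supp f'"
  have fS: "finite ?S" using f f' by (simp add: fin_def)
  have fT: "finite (supp g)" using g by (simp add: fin_def)
  have "hmult (\<lambda>y. f y + f' y) g = (\<lambda>y. \<Sum>x\<in>?S. \<Sum>x'\<in>supp g. (f x + f' x) * g x' * bprod x x' y)"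
    by (rule hmult_eq[OF fS _ fT]) (auto simp: supp_def)
  moreover have "hmult f g = (\<lambda>y. \<Sum>x\<in>?S. \<Sum>x'\<in>supp g. f x * g x' * bprod x x' y)"
    by (rule hmult_eq[OF fS _ fT]) auto
  moreover have "hmult f' g = (\<lambda>y. \<Sum>x\<in>?S. \<Sum>x'\<in>supp g. f' x * g x' * bprod x x' y)"
    by (rule hmult_eq[OF fS _ fT]) auto
  ultimately show "hmult (\<lambda>y. f y + f' y) g = (\<lambda>y. hmult f g y + hmult f' g y)"
    by (simp add: distrib_right sum.distrib)
next
  fix c and f :: "idx \<Rightarrow> 'a" assume f: "fin f"
  have fS: "finite (supp f)" using f by (simp add: fin_def)
  have fT: "finite (supp g)" using g by (simp add: fin_def)
  have "hmult (\<lambda>y. c * f y) g = (\<lambda>y. \<Sum>x\<in>supp f. \<Sum>x'\<in>supp g. (c * f x) * g x' * bprod x x' y)"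
    by (rule hmult_eq[OF fS _ fT]) (auto simp: supp_def)
  moreover have "hmult f g = (\<lambda>y. \<Sum>x\<in>supp f. \<Sum>x'\<in>supp g. f x * g x' * bprod x x' y)"
    by (rule hmult_eq[OF fS _ fT]) auto
  ultimately show "hmult (\<lambda>y. c * f y) g = (\<lambda>y. c * hmult f g y)"
    by (simp add: sum_distrib_left mult.assoc)
qed

lemma linop_hmult_right: assumes f: "fin f" shows "linop (hmult f)"
  unfolding linop_def
proof (intro allI impI conjI)
  fix g g' :: "idx \<Rightarrow> 'a" assume g: "fin g" and g': "fin g'"
  let ?T = "supp g \<union> supp g'"
  have fT: "finite ?T" using g g' by (simp add: fin_def)
  have fS: "finite (supp f)" using f by (simp add: fin_def)
  have "hmult f (\<lambda>y. g y + g' y) = (\<lambda>y. \<Sum>x\<in>supp f. \<Sum>x'\<in>?T. f x * (g x' + g' x') * bprod x x' y)"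
    by (rule hmult_eq[OF fS _ fT]) (auto simp: supp_def)
  moreover have "hmult f g = (\<lambda>y. \<Sum>x\<in>supp f. \<Sum>x'\<in>?T. f x * g x' * bprod x x' y)"
    by (rule hmult_eq[OF fS _ fT]) auto
  moreover have "hmult f g' = (\<lambda>y. \<Sum>x\<in>supp f. \<Sum>x'\<in>?T. f x * g' x' * bprod x x' y)"
    by (rule hmult_eq[OF fS _ fT]) auto
  ultimately show "hmult f (\<lambda>y. g y + g' y) = (\<lambda>y. hmult f g y + hmult f g' y)"
    by (simp add: distrib_right distrib_left sum.distrib)
next
  fix c and g :: "idx \<Rightarrow> 'a" assume g: "fin g"
  have fS: "finite (supp f)" using f by (simp add: fin_def)
  have fT: "finite (supp g)" using g by (simp add: fin_def)
  have "hmult f (\<lambda>y. c * g y) = (\<lambda>y. \<Sum>x\<in>supp f. \<Sum>x'\<in>supp g. f x * (c * g x') * bprod x x' y)"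
    by (rule hmult_eq[OF fS _ fT]) (auto simp: supp_def)
  moreover have "hmult f g = (\<lambda>y. \<Sum>x\<in>supp f. \<Sum>x'\<in>supp g. f x * g x' * bprod x x' y)"
    by (rule hmult_eq[OF fS _ fT]) auto
  ultimately show "hmult f (\<lambda>y. c * g y) = (\<lambda>y. c * hmult f g y)"
    by (simp add: sum_distrib_left mult.assoc mult.left_commute)
qed

lemma hm_bvec: "hmult (bvec x) (bvec x') = (bprod x x' :: idx \<Rightarrow> 'a::field)"
  unfolding hmult_def supp_bvec by (simp add: bvec_def)

lemma phi_bvec: "phi \<rho> (bvec x) = (phib \<rho> x :: idx \<Rightarrow> 'a::field)"
  unfolding phi_def supp_bvec by (simp add: bvec_def)



definition Aff :: "(int \<Rightarrow> int) set" where
  "Aff = {\<rho>. (\<exists>t. \<rho> = (\<lambda>i. i + t)) \<or> (\<exists>m. \<rho> = refl_m m)}"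

lemma Aff_cases:
  assumes "\<rho> \<in> Aff"
  obtains t where "\<rho> = (\<lambda>i. i + t)" | m where "\<rho> = refl_m m"
  using assms unfolding Aff_def by blast

lemma dsgn_trans[simp]: "dsgn (\<lambda>i. i + t) = 1"
proof -
  have "\<not> (\<exists>m. (\<lambda>i. i + t) = refl_m m)"
  proof
    assume "\<exists>m. (\<lambda>i. i + t) = refl_m m"
    then obtain m where h: "(\<lambda>i. i + t) = refl_m m" by blast
    have "0 + t = m - 0" "1 + t = m - 1" using fun_cong[OF h, of 0] fun_cong[OF h, of 1]
      by (simp_all add: refl_m_def)
    thus False by simp
  qed
  thus ?thesis by (simp add: dsgn_def)
qed

lemma dsgn_refl[simp]: "dsgn (refl_m m) = -1"
  by (auto simp: dsgn_def)

lemma refl_m_app[simp]: "refl_m m i = m - i"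
  by (simp add: refl_m_def)

lemma Aff_mod: "\<rho> \<in> Aff \<Longrightarrow> a mod 3 = b mod 3 \<longleftrightarrow> \<rho> a mod 3 = \<rho> b mod 3"
proof (erule Aff_cases)
  fix t assume "\<rho> = (\<lambda>i. i + t)"
  thus ?thesis by (simp add: mod_eq_dvd_iff)
next
  fix m assume "\<rho> = refl_m m"
  thus ?thesis by (simp add: mod_eq_dvd_iff dvd_diff_commute)
qed

lemma pel_mod: "a mod 3 = b mod 3 \<Longrightarrow> pel a k = pel b k"
  unfolding pel_def by simp
lemma pel_base: "pel 0 k y + pel 1 k y + pel 2 k y = (0::'a::field)"
  unfolding pel_def by (cases "1 \<le> k \<and> 3 dvd k") simp_all
lemma perm3: fixes u v w :: int
    assumes "u \<in> {0,1,2}" "v \<in> {0,1,2}" "w \<in> {0,1,2}" "u \<noteq> v" "v \<noteq> w" "u \<noteq> w"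
    shows "(u,v,w) \<in> {(0,1,2),(0,2,1),(1,0,2),(1,2,0),(2,0,1),(2,1,0)}" using assms by auto
lemma pel_gen: fixes u v w :: int
    assumes "(u,v,w) \<in> {(0,1,2),(0,2,1),(1,0,2),(1,2,0),(2,0,1),(2,1,0)}"
    shows "pel u k y + pel v k y + pel w k y = (0::'a::field)"
  using assms pel_base[of k y, where 'a='a] by (auto simp: ac_simps)
lemma pel_three:
  assumes "a mod 3 \<noteq> b mod 3" "b mod 3 \<noteq> c mod 3" "a mod 3 \<noteq> c mod 3"
  shows "pel a k y + pel b k y + pel c k y = (0::'a::field)"
proof -
  have e: "pel a k = pel (a mod 3) k" "pel b k = pel (b mod 3) k" "pel c k = pel (c mod 3) k"
    by (rule pel_mod, simp)+
  have "pel (a mod 3) k y + pel (b mod 3) k y + pel (c mod 3) k y = (0::'a)"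
    by (rule pel_gen, rule perm3) (use assms in auto)
  then show ?thesis by (simp only: e)
qed

lemma zel_mod: assumes "a mod 3 = b mod 3" shows "zel a k = zel b k"
proof -
  have h1: "(a + 1) mod 3 = (b + 1) mod 3" and h2: "(a - 1) mod 3 = (b - 1) mod 3" using assms by (simp_all add: mod_eq_dvd_iff)
  show ?thesis unfolding zel_def by (simp only: pel_mod[OF h1] pel_mod[OF h2])
qed

lemma zel_three:
  assumes "a mod 3 \<noteq> b mod 3" "b mod 3 \<noteq> c mod 3" "a mod 3 \<noteq> c mod 3"
  shows "zel a k y + zel b k y + zel c k y = (0::'a::field)"
proof -
  have 1: "pel (a+1) k y + pel (b+1) k y + pel (c+1) k y = (0::'a)"
    by (rule pel_three) (use assms in \<open>simp_all add: mod_eq_dvd_iff\<close>)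
  have 2: "pel (a-1) k y + pel (b-1) k y + pel (c-1) k y = (0::'a)"
    by (rule pel_three) (use assms in \<open>simp_all add: mod_eq_dvd_iff\<close>)
  have "zel a k y + zel b k y + zel c k y = (
     (pel (a+1) k y + pel (b+1) k y + pel (c+1) k y) - (pel (a-1) k y + pel (b-1) k y + pel (c-1) k y) :: 'a)"
    unfolding zel_def by (simp add: algebra_simps)
  thus ?thesis using 1 2 by simp
qed

lemma three_eq: "a + b + c = (0::'a::field) \<Longrightarrow> a = - b - c"
  by (simp add: eq_neg_iff_add_eq_0 algebra_simps)
    
lemma ext3:
  fixes L G :: "int \<Rightarrow> idx \<Rightarrow> 'a::field"
  assumes Lp: "\<And>a b. a mod 3 = b mod 3 \<Longrightarrow> L a = L b"
    and Gp: "\<And>a b. a mod 3 = b mod 3 \<Longrightarrow> G a = G b"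
    and Ls: "\<And>y. L 0 y + L 1 y + L 2 y = 0"
    and Gs: "\<And>y. G 0 y + G 1 y + G 2 y = 0"
    and L1: "L 1 = G 1" and L2: "L 2 = G 2"
  shows "L r = G r"
proof -
  have L0: "L 0 = G 0"
  proof
    fix y
    show "L 0 y = G 0 y" using three_eq[OF Ls[of y]] three_eq[OF Gs[of y]] L1 L2 by simp
  qed
  have "r mod 3 \<in> {0,1,2}" by auto
  moreover have "L r = L (r mod 3)" "G r = G (r mod 3)" by (rule Lp, simp) (rule Gp, simp)
  ultimately show ?thesis using L0 L1 L2 by (elim insertE emptyE) simp_all
qed

definition vk :: "nat \<Rightarrow> bool" where "vk k \<longleftrightarrow> k \<ge> 1 \<and> 3 dvd k"

lemma pel_1: "vk k \<Longrightarrow> pel 1 k = bvec (IP 1 k)" by (simp add: pel_def vk_def)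
lemma pel_2: "vk k \<Longrightarrow> pel 2 k = bvec (IP 2 k)" by (simp add: pel_def vk_def)

lemma linop_pel3: assumes "linop F" shows "F (pel 0 k) y + F (pel 1 k) y + F (pel 2 k) y = 0"
proof -
  have z: "(\<lambda>y. (\<lambda>y. pel 0 k y + pel 1 k y) y + pel 2 k y) = (\<lambda>y. (0::'a))"
    by (rule ext) (simp add: pel_base)
  have "F (\<lambda>y. (\<lambda>y. pel 0 k y + pel 1 k y) y + pel 2 k y) =
        (\<lambda>y. F (\<lambda>y. pel 0 k y + pel 1 k y) y + F (pel 2 k) y)"
    by (rule linop_add[OF assms]) auto
  also have "\<dots> = (\<lambda>y. F (pel 0 k) y + F (pel 1 k) y + F (pel 2 k) y)"
    by (subst linop_add[OF assms]) auto
  finally have "(\<lambda>y. F (pel 0 k) y + F (pel 1 k) y + F (pel 2 k) y) = (\<lambda>y. 0)"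
    unfolding z linop_zero[OF assms] by (rule sym)
  thus ?thesis by (rule fun_cong)
qed

lemma ext_lin:
  fixes F :: "(idx \<Rightarrow> 'a::field) \<Rightarrow> idx \<Rightarrow> 'a" and G :: "int \<Rightarrow> idx \<Rightarrow> 'a"
  assumes F: "linop F" and k: "vk k"
    and Gp: "\<And>a b. a mod 3 = b mod 3 \<Longrightarrow> G a = G b"
    and Gs: "\<And>y. G 0 y + G 1 y + G 2 y = 0"
    and B1: "F (bvec (IP 1 k)) = G 1" and B2: "F (bvec (IP 2 k)) = G 2"
  shows "F (pel r k) = G r"
proof -
  have Lp: "F (pel a k) = F (pel b k)" if "a mod 3 = b mod 3" for a b
  proof -
    have "pel a k = (pel b k :: idx \<Rightarrow> 'a)" by (rule pel_mod[OF that])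
    thus ?thesis by simp
  qed
  have L1: "F (pel 1 k) = G 1" by (subst pel_1[OF k]) (rule B1)
  have L2: "F (pel 2 k) = G 2" by (subst pel_2[OF k]) (rule B2)
  show ?thesis
    using ext3[of "\<lambda>r. F (pel r k)" G, OF Lp Gp linop_pel3[OF F] Gs L1 L2] by simp
qed

lemma bprod_right_mod: assumes h: "a mod 3 = b mod 3" shows "bprod x (IP a k) = bprod x (IP b k)"
proof (cases x)
  case (IA i)
  have m: "(- (i + a)) mod 3 = (- (i + b)) mod 3" using h by (simp add: mod_eq_dvd_iff dvd_diff_commute)
  show ?thesis unfolding IA bprod.simps by (simp only: pel_mod[OF h] pel_mod[OF m])
next
  case (IS j)
  then show ?thesis unfolding IS bprod.simps by (simp only: pel_mod[OF h])
next
  case (IP r h)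
  have m: "(- (r + a)) mod 3 = (- (r + b)) mod 3" using assms by (simp add: mod_eq_dvd_iff dvd_diff_commute)
  show ?thesis unfolding IP bprod.simps by (simp only: zel_mod[OF m])
qed

lemma bprod_left_mod: assumes h: "a mod 3 = b mod 3" shows "bprod (IP a k) x = bprod (IP b k) x"
proof (cases x)
  case (IA i)
  have m: "(- (i + a)) mod 3 = (- (i + b)) mod 3" using h by (simp add: mod_eq_dvd_iff dvd_diff_commute)
  show ?thesis unfolding IA bprod.simps by (simp only: pel_mod[OF h] pel_mod[OF m])
next
  case (IS j)
  then show ?thesis unfolding IS bprod.simps by (simp only: pel_mod[OF h])
next
  case (IP r h)
  have m: "(- (a + r)) mod 3 = (- (b + r)) mod 3" using assms by (simp add: mod_eq_dvd_iff dvd_diff_commute)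
  show ?thesis unfolding IP bprod.simps by (simp only: zel_mod[OF m])
qed



lemma lin_A: "c*a0 - b0 + (c*a1 - b1) + (c*a2 - b2) = c*(a0+a1+a2) - (b0+b1+b2::'a::field)"
  by (simp add: algebra_simps)

lemma lin_S: "c*(a0+b0) - e*(u0+v0) + (c*(a1+b1) - e*(u1+v1)) + (c*(a2+b2) - e*(u2+v2))
   = c*((a0+a1+a2)+(b0+b1+b2)) - e*((u0+u1+u2)+(v0+v1+(v2::'a::field)))"
  by (simp add: algebra_simps)

lemma pel_base': "pel 0 k y + pel 1 k y + pel 2 k y = (0::'a::field)"
  by (rule pel_base)

lemma zsum_r: "zel (- s) k y + zel (- (s + 1)) k y + zel (- (s + 2)) k y = (0::'a::field)"
  by (rule zel_three) (simp_all add: mod_eq_dvd_iff)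

lemma zsum_l: "zel (- (0 + s)) k y + zel (- (1 + s)) k y + zel (- (2 + s)) k y = (0::'a::field)"
  by (rule zel_three) (simp_all add: mod_eq_dvd_iff)

lemma psum_A: "pel (- i) k y + pel (- (i + 1)) k y + pel (- (i + 2)) k y = (0::'a::field)"
  by (rule pel_three) (simp_all add: mod_eq_dvd_iff)

lemma sumzero_right: "bprod x (IP 0 k) y + bprod x (IP 1 k) y + bprod x (IP 2 k) y = (0::'a::field)"
proof (cases x)
  case (IA i)
  show ?thesis unfolding IA bprod.simps by (simp only: lin_A pel_base' psum_A add_0_right mult_zero_right diff_zero)
next
  case (IS j)
  show ?thesis unfolding IS bprod.simps by (simp only: lin_S pel_base' add_0_right mult_zero_right diff_zero)
next
  case (IP s h)
  show ?thesis unfolding IP bprod.simps by (simp only: lin_S zsum_r add_0_right mult_zero_right diff_zero)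
qed

lemma sumzero_left: "bprod (IP 0 k) x y + bprod (IP 1 k) x y + bprod (IP 2 k) x y = (0::'a::field)"
proof (cases x)
  case (IA i)
  show ?thesis unfolding IA bprod.simps by (simp only: lin_A pel_base' psum_A add_0_right mult_zero_right diff_zero)
next
  case (IS j)
  show ?thesis unfolding IS bprod.simps by (simp only: lin_S pel_base' add_0_right mult_zero_right diff_zero)
next
  case (IP s h)
  show ?thesis unfolding IP bprod.simps by (simp only: lin_S zsum_l add_0_right mult_zero_right diff_zero)
qed

lemma hm_bvec_pel: assumes k: "vk k"
  shows "hmult (bvec x) (pel r k) = (bprod x (IP r k) :: idx \<Rightarrow> 'a::field)"
  by (rule ext_lin[OF linop_hmult_right[OF fin_bvec] k, where G="\<lambda>r. bprod x (IP r k)"])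
     (auto intro: bprod_right_mod sumzero_right simp: hm_bvec)

lemma hm_pel_bvec: assumes k: "vk k"
  shows "hmult (pel r k) (bvec x) = (bprod (IP r k) x :: idx \<Rightarrow> 'a::field)"
  by (rule ext_lin[OF linop_hmult_left[OF fin_bvec] k, where G="\<lambda>r. bprod (IP r k) x"])
     (auto intro: bprod_left_mod sumzero_left simp: hm_bvec)

lemma hm_pel_pel: assumes h: "vk h" and k: "vk k"
  shows "hmult (pel r h) (pel t k) = (bprod (IP r h) (IP t k) :: idx \<Rightarrow> 'a::field)"
  apply (rule ext_lin[OF linop_hmult_left[OF fin_pel] h, where G="\<lambda>r. bprod (IP r h) (IP t k)"])
     apply (erule bprod_left_mod)
    apply (rule sumzero_left)
   apply (rule hm_bvec_pel[OF k])
  apply (rule hm_bvec_pel[OF k])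
  done



lemma phi_add: "fin f \<Longrightarrow> fin g \<Longrightarrow> phi \<rho> (\<lambda>y. f y + g y) = (\<lambda>y. phi \<rho> f y + phi \<rho> g y)"
  by (rule linop_add[OF linop_phi])
lemma phi_diff: "fin f \<Longrightarrow> fin g \<Longrightarrow> phi \<rho> (\<lambda>y. f y - g y) = (\<lambda>y. phi \<rho> f y - phi \<rho> g y)"
  by (rule linop_diff[OF linop_phi])
lemma phi_scale: "fin f \<Longrightarrow> phi \<rho> (\<lambda>y. c * f y) = (\<lambda>y. c * phi \<rho> f y)"
  by (rule linop_scale[OF linop_phi])
lemma phi_minus: "fin f \<Longrightarrow> phi \<rho> (\<lambda>y. - f y) = (\<lambda>y. - phi \<rho> f y)"
  by (rule linop_minus[OF linop_phi])

lemma hm_scale_l: "fin f \<Longrightarrow> fin g \<Longrightarrow> hmult (\<lambda>y. c * f y) g = (\<lambda>y. c * hmult f g y)"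
  by (rule linop_scale[OF linop_hmult_left])
lemma hm_scale_r: "fin f \<Longrightarrow> fin g \<Longrightarrow> hmult f (\<lambda>y. c * g y) = (\<lambda>y. c * hmult f g y)"
  by (rule linop_scale[OF linop_hmult_right])

lemma phib_IA: "phib \<rho> (IA i) = ael (\<rho> i)" by (simp add: phib_def)
lemma phib_IS: "phib \<rho> (IS j) = sel j" by (simp add: phib_def)
lemma phib_IP: "phib \<rho> (IP r k) = (\<lambda>y. dsgn \<rho> * pel (\<rho> r) k y)" by (simp add: phib_def vsc_def)

lemma phi_ael: "phi \<rho> (ael i) = ael (\<rho> i)"
  unfolding ael_def phi_bvec by (simp add: phib_def ael_def)

lemma sel_bvec: "j \<ge> 1 \<Longrightarrow> sel j = bvec (IS j)" by (simp add: sel_def)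

lemma phi_sel: "phi \<rho> (sel j) = sel j"
proof (cases "j = 0")
  case True
  then show ?thesis using linop_zero[OF linop_phi] by (simp add: sel_def)
next
  case False
  then show ?thesis using phi_bvec[of \<rho> "IS j"] by (simp add: sel_def phib_def)
qed

lemma Aff_ne: "\<rho> \<in> Aff \<Longrightarrow> a mod 3 \<noteq> b mod 3 \<Longrightarrow> \<rho> a mod 3 \<noteq> \<rho> b mod 3"
  using Aff_mod by blast

lemma phi_pel: assumes A: "\<rho> \<in> Aff"
  shows "phi \<rho> (pel r k) = (\<lambda>y. dsgn \<rho> * pel (\<rho> r) k y :: 'a::field)"
proof (cases "vk k")
  case False
  then have "pel r k = (\<lambda>y. 0::'a)" "\<And>s. pel s k = (\<lambda>y. 0::'a)" by (auto simp: pel_def vk_def)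
  then show ?thesis using linop_zero[OF linop_phi] by simp
next
  case True
  show ?thesis
  proof (rule ext_lin[OF linop_phi True, where G="\<lambda>r. (\<lambda>y. dsgn \<rho> * pel (\<rho> r) k y)"])
    show "\<And>a b. a mod 3 = b mod 3 \<Longrightarrow> (\<lambda>y. dsgn \<rho> * pel (\<rho> a) k y) = (\<lambda>y. dsgn \<rho> * pel (\<rho> b) k y :: 'a)"
    proof -
      fix a b :: int assume "a mod 3 = b mod 3"
      then have "\<rho> a mod 3 = \<rho> b mod 3" using Aff_mod[OF A] by blast
      then have "pel (\<rho> a) k = (pel (\<rho> b) k :: idx \<Rightarrow> 'a)" by (rule pel_mod)
      then show "(\<lambda>y. dsgn \<rho> * pel (\<rho> a) k y) = (\<lambda>y. dsgn \<rho> * pel (\<rho> b) k y :: 'a)" by simp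
    qed
    show "\<And>y. dsgn \<rho> * pel (\<rho> 0) k y + dsgn \<rho> * pel (\<rho> 1) k y + dsgn \<rho> * pel (\<rho> 2) k y = (0::'a)"
    proof -
      fix y
      have "pel (\<rho> 0) k y + pel (\<rho> 1) k y + pel (\<rho> 2) k y = (0::'a)"
        by (rule pel_three; rule Aff_ne[OF A]; simp)
      then have "dsgn \<rho> * (pel (\<rho> 0) k y + pel (\<rho> 1) k y + pel (\<rho> 2) k y) = (0::'a)" by simp
      then show "dsgn \<rho> * pel (\<rho> 0) k y + dsgn \<rho> * pel (\<rho> 1) k y + dsgn \<rho> * pel (\<rho> 2) k y = (0::'a)"
        by (simp add: distrib_left)
    qed
    show "phi \<rho> (bvec (IP 1 k)) = (\<lambda>y. dsgn \<rho> * pel (\<rho> 1) k y :: 'a)"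
      by (simp add: phi_bvec phib_IP)
    show "phi \<rho> (bvec (IP 2 k)) = (\<lambda>y. dsgn \<rho> * pel (\<rho> 2) k y :: 'a)"
      by (simp add: phi_bvec phib_IP)
  qed
qed

lemma phi_zel: assumes A: "\<rho> \<in> Aff"
  shows "phi \<rho> (zel r k) = (zel (\<rho> r) k :: idx \<Rightarrow> 'a::field)"
proof -
  have "phi \<rho> (zel r k) = (\<lambda>y. phi \<rho> (pel (r+1) k) y - phi \<rho> (pel (r-1) k) y :: 'a)"
    unfolding zel_def by (rule phi_diff) auto
  also have "\<dots> = (\<lambda>y. dsgn \<rho> * pel (\<rho> (r+1)) k y - dsgn \<rho> * pel (\<rho> (r-1)) k y)"
    by (simp add: phi_pel[OF A])
  also have "\<dots> = zel (\<rho> r) k"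
    using A
  proof (cases rule: Aff_cases)
    case 1
    then show ?thesis by (simp add: zel_def algebra_simps)
  next
    case 2
    then show ?thesis by (simp add: zel_def algebra_simps)
  qed
  finally show ?thesis .
qed

lemma aff_abs: "\<rho> \<in> Aff \<Longrightarrow> \<bar>\<rho> a - \<rho> b\<bar> = \<bar>a - b\<bar>"
  by (erule Aff_cases) auto

lemma aff_neg: "\<rho> \<in> Aff \<Longrightarrow> (\<rho> (- (a + b))) mod 3 = (- (\<rho> a + \<rho> b)) mod 3"
  by (erule Aff_cases) (simp_all add: mod_eq_dvd_iff algebra_simps)

lemma dsgn_sq: "\<rho> \<in> Aff \<Longrightarrow> dsgn \<rho> * dsgn \<rho> = (1::'a::field)"
  by (erule Aff_cases) auto



lemma hm_ael_ael: "hmult (ael a) (ael b) = (bprod (IA a) (IA b) :: idx \<Rightarrow> 'a::field)"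
  unfolding ael_def by (rule hm_bvec)
lemma hm_ael_sel: "j \<ge> 1 \<Longrightarrow> hmult (ael a) (sel j) = (bprod (IA a) (IS j) :: idx \<Rightarrow> 'a::field)"
  unfolding ael_def by (simp only: sel_bvec hm_bvec)
lemma hm_sel_ael: "j \<ge> 1 \<Longrightarrow> hmult (sel j) (ael a) = (bprod (IS j) (IA a) :: idx \<Rightarrow> 'a::field)"
  unfolding ael_def by (simp only: sel_bvec hm_bvec)
lemma hm_sel_sel: "j \<ge> 1 \<Longrightarrow> l \<ge> 1 \<Longrightarrow> hmult (sel j) (sel l) = (bprod (IS j) (IS l) :: idx \<Rightarrow> 'a::field)"
  by (simp only: sel_bvec hm_bvec)
lemma hm_ael_pel: "vk k \<Longrightarrow> hmult (ael a) (pel r k) = (bprod (IA a) (IP r k) :: idx \<Rightarrow> 'a::field)"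
  unfolding ael_def by (rule hm_bvec_pel)
lemma hm_pel_ael: "vk k \<Longrightarrow> hmult (pel r k) (ael a) = (bprod (IP r k) (IA a) :: idx \<Rightarrow> 'a::field)"
  unfolding ael_def by (rule hm_pel_bvec)
lemma hm_sel_pel: "j \<ge> 1 \<Longrightarrow> vk k \<Longrightarrow> hmult (sel j) (pel r k) = (bprod (IS j) (IP r k) :: idx \<Rightarrow> 'a::field)"
  by (simp only: sel_bvec hm_bvec_pel)
lemma hm_pel_sel: "j \<ge> 1 \<Longrightarrow> vk k \<Longrightarrow> hmult (pel r k) (sel j) = (bprod (IP r k) (IS j) :: idx \<Rightarrow> 'a::field)"
  by (simp only: sel_bvec hm_pel_bvec)

lemma aff_pair: "\<rho> \<in> Aff \<Longrightarrow>
  ael (\<rho> (a - d)) y + ael (\<rho> (a + d)) y = (ael (\<rho> a - d) y + ael (\<rho> a + d) y :: 'a::field)"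
  by (erule Aff_cases) (simp_all add: algebra_simps)

lemmas linrules = phi_add phi_diff phi_scale phi_minus hm_scale_l hm_scale_r
  fin_add fin_diff fin_scale fin_uminus fin_ael fin_sel fin_pel fin_zel fin_bvec

lemma key:
  assumes A: "\<rho> \<in> Aff" and vx: "valid_idx x" and vx': "valid_idx x'"
  shows "phi \<rho> (bprod x x') = (hmult (phib \<rho> x) (phib \<rho> x') :: idx \<Rightarrow> 'a::field)"
proof (cases x)
  case (IA i)
  show ?thesis
  proof (cases x')
    case (IA i')
    show ?thesis unfolding \<open>x = IA i\<close> \<open>x' = IA i'\<close>
      by (simp only: bprod.simps phib_IA hm_ael_ael aff_abs[OF A] linrules phi_ael phi_sel phi_zel[OF A])
  next
    case (IS j)
    have j: "j \<ge> 1" using vx' IS by (simp add: valid_idx_def)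
    show ?thesis unfolding \<open>x = IA i\<close> \<open>x' = IS j\<close>
      by (simp only: bprod.simps phib_IA phib_IS hm_ael_sel[OF j] aff_pair[OF A] linrules phi_ael phi_sel phi_zel[OF A])
  next
    case (IP r k)
    have k: "vk k" using vx' IP by (simp add: valid_idx_def vk_def)
    show ?thesis unfolding \<open>x = IA i\<close> \<open>x' = IP r k\<close>
      by (simp only: bprod.simps phib_IA phib_IP hm_ael_pel[OF k] linrules phi_ael phi_pel[OF A]
          pel_mod[OF aff_neg[OF A]]; (rule ext)?; simp add: algebra_simps)
  qed
next
  case (IS j)
  have j: "j \<ge> 1" using vx IS by (simp add: valid_idx_def)
  show ?thesis
  proof (cases x')
    case (IA i)
    show ?thesis unfolding \<open>x = IS j\<close> \<open>x' = IA i\<close>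
      by (simp only: bprod.simps phib_IA phib_IS hm_sel_ael[OF j] aff_pair[OF A] linrules phi_ael phi_sel phi_zel[OF A])
  next
    case (IS l)
    have l: "l \<ge> 1" using vx' IS by (simp add: valid_idx_def)
    show ?thesis unfolding \<open>x = IS j\<close> \<open>x' = IS l\<close>
      by (simp only: bprod.simps phib_IS hm_sel_sel[OF j l] linrules phi_sel)
  next
    case (IP r k)
    have k: "vk k" using vx' IP by (simp add: valid_idx_def vk_def)
    show ?thesis unfolding \<open>x = IS j\<close> \<open>x' = IP r k\<close>
      by (simp only: bprod.simps phib_IS phib_IP hm_sel_pel[OF j k] linrules phi_sel phi_pel[OF A];
          (rule ext)?; simp add: algebra_simps)
  qed
next
  case (IP r h)
  have h: "vk h" using vx IP by (simp add: valid_idx_def vk_def)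
  show ?thesis
  proof (cases x')
    case (IA i)
    show ?thesis unfolding \<open>x = IP r h\<close> \<open>x' = IA i\<close>
      by (simp only: bprod.simps phib_IA phib_IP hm_pel_ael[OF h] linrules phi_ael phi_pel[OF A]
          pel_mod[OF aff_neg[OF A]]; (rule ext)?; simp add: algebra_simps)
  next
    case (IS j)
    have j: "j \<ge> 1" using vx' IS by (simp add: valid_idx_def)
    show ?thesis unfolding \<open>x = IP r h\<close> \<open>x' = IS j\<close>
      by (simp only: bprod.simps phib_IS phib_IP hm_pel_sel[OF j h] linrules phi_sel phi_pel[OF A];
          (rule ext)?; simp add: algebra_simps)
  next
    case (IP t k)
    have k: "vk k" using vx' IP by (simp add: valid_idx_def vk_def)
    show ?thesis unfolding \<open>x = IP r h\<close> \<open>x' = IP t k\<close>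
      by (simp only: bprod.simps phib_IP hm_pel_pel[OF h k] linrules phi_zel[OF A]
          zel_mod[OF aff_neg[OF A]]; (rule ext)?; simp add: mult.assoc[symmetric] dsgn_sq[OF A])
  qed
qed



lemma Dinf_Aff: "\<rho> \<in> Dinf \<Longrightarrow> \<rho> \<in> Aff"
proof (induction rule: Dinf.induct)
  case D_id
  have "id = (\<lambda>i::int. i + 0)" by (simp add: id_def)
  then show ?case unfolding Aff_def by blast
next
  case (D_t0 \<rho>)
  from D_t0.IH show ?case
  proof (cases rule: Aff_cases)
    case (1 t)
    then have "refl_m 0 \<circ> \<rho> = refl_m (-t)" by (auto simp: fun_eq_iff)
    then show ?thesis unfolding Aff_def by blast
  next
    case (2 m)
    then have "refl_m 0 \<circ> \<rho> = (\<lambda>i. i + (-m))" by (auto simp: fun_eq_iff)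
    then show ?thesis unfolding Aff_def by blast
  qed
next
  case (D_t12 \<rho>)
  from D_t12.IH show ?case
  proof (cases rule: Aff_cases)
    case (1 t)
    then have "refl_m 1 \<circ> \<rho> = refl_m (1-t)" by (auto simp: fun_eq_iff)
    then show ?thesis unfolding Aff_def by blast
  next
    case (2 m)
    then have "refl_m 1 \<circ> \<rho> = (\<lambda>i. i + (1-m))" by (auto simp: fun_eq_iff)
    then show ?thesis unfolding Aff_def by blast
  qed
qed

lemma Aff_comp: assumes "\<rho> \<in> Aff" "\<sigma> \<in> Aff"
  shows "\<rho> \<circ> \<sigma> \<in> Aff \<and> dsgn (\<rho> \<circ> \<sigma>) = (dsgn \<rho> * dsgn \<sigma> :: 'a::field)"
  using assms(1)
proof (cases rule: Aff_cases)
  case (1 t)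
  from assms(2) show ?thesis
  proof (cases rule: Aff_cases)
    case (1 s)
    have "\<rho> \<circ> \<sigma> = (\<lambda>i. i + (s + t))" using \<open>\<rho> = _\<close> 1 by (auto simp: fun_eq_iff)
    then show ?thesis using \<open>\<rho> = _\<close> 1 unfolding Aff_def by auto
  next
    case (2 m)
    have "\<rho> \<circ> \<sigma> = refl_m (m + t)" using \<open>\<rho> = _\<close> 2 by (auto simp: fun_eq_iff)
    then show ?thesis using \<open>\<rho> = _\<close> 2 unfolding Aff_def by auto
  qed
next
  case (2 m)
  from assms(2) show ?thesis
  proof (cases rule: Aff_cases)
    case (1 s)
    have "\<rho> \<circ> \<sigma> = refl_m (m - s)" using \<open>\<rho> = _\<close> 1 by (auto simp: fun_eq_iff)
    then show ?thesis using \<open>\<rho> = _\<close> 1 unfolding Aff_def by auto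
  next
    case (2 m')
    have "\<rho> \<circ> \<sigma> = (\<lambda>i. i + (m - m'))" using \<open>\<rho> = refl_m m\<close> 2 by (auto simp: fun_eq_iff)
    then show ?thesis using \<open>\<rho> = refl_m m\<close> 2 unfolding Aff_def by auto
  qed
qed

lemma Aff_inv: assumes "\<rho> \<in> Aff" shows "\<exists>\<rho>'\<in>Aff. \<rho>' \<circ> \<rho> = id \<and> \<rho> \<circ> \<rho>' = id"
  using assms
proof (cases rule: Aff_cases)
  case (1 t)
  have "(\<lambda>i. i + (-t)) \<in> Aff" unfolding Aff_def by blast
  moreover have "(\<lambda>i. i + (-t)) \<circ> \<rho> = id \<and> \<rho> \<circ> (\<lambda>i. i + (-t)) = id" using 1 by (auto simp: fun_eq_iff)
  ultimately show ?thesis by blast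
next
  case (2 m)
  have "refl_m m \<in> Aff" unfolding Aff_def by blast
  moreover have "refl_m m \<circ> \<rho> = id \<and> \<rho> \<circ> refl_m m = id" using 2 by (auto simp: fun_eq_iff)
  ultimately show ?thesis by blast
qed

lemma carrier_fin: "f \<in> Hcarrier \<Longrightarrow> fin f"
  by (simp add: Hcarrier_def fin_def)

lemma carrier_valid: "f \<in> Hcarrier \<Longrightarrow> x \<in> supp f \<Longrightarrow> valid_idx x"
  by (simp add: Hcarrier_def supp_def)

lemma fin_phib[simp,intro]: "fin (phib \<rho> x)"
  by (cases x) (simp_all add: phib_IA phib_IS phib_IP)

lemma linop_sum_scale: assumes "linop F" "finite S" "\<And>x. x \<in> S \<Longrightarrow> fin (u x)"
  shows "F (\<lambda>y. \<Sum>x\<in>S. c x * u x y) = (\<lambda>y. \<Sum>x\<in>S. c x * F (u x) y)"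
proof -
  have "F (\<lambda>y. \<Sum>x\<in>S. (\<lambda>y. c x * u x y) y) = (\<lambda>y. \<Sum>x\<in>S. F (\<lambda>y. c x * u x y) y)"
    by (rule linop_sum[OF assms(1,2)]) (use assms(3) in auto)
  also have "\<dots> = (\<lambda>y. \<Sum>x\<in>S. c x * F (u x) y)"
    using linop_scale[OF assms(1) assms(3)] by simp
  finally show ?thesis by simp
qed

lemma phi_carrier_eq: "phi \<rho> f = (\<lambda>y. \<Sum>x\<in>supp f. f x * phib \<rho> x y)"
  by (simp add: phi_def)

lemma dsgn_id: "dsgn id = (1::'a::field)"
proof -
  have "id = (\<lambda>i::int. i + 0)" by (simp add: id_def)
  thus ?thesis using dsgn_trans[of 0] by simp
qed

lemma phib_comp: assumes A: "\<rho> \<in> Aff" "\<sigma> \<in> Aff" and v: "valid_idx x"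
  shows "phi \<rho> (phib \<sigma> x) = (phib (\<rho> \<circ> \<sigma>) x :: idx \<Rightarrow> 'a::field)"
proof (cases x)
  case (IA i)
  then show ?thesis by (simp add: phib_IA phi_ael)
next
  case (IS j)
  then show ?thesis by (simp add: phib_IS phi_sel)
next
  case (IP r k)
  have d: "dsgn (\<rho> \<circ> \<sigma>) = (dsgn \<rho> * dsgn \<sigma> :: 'a)" using Aff_comp[OF A] by blast
  show ?thesis unfolding IP phib_IP
    by (simp add: phi_scale phi_pel[OF A(1)] d mult_ac)
qed

lemma phi_comp: assumes A: "\<rho> \<in> Aff" "\<sigma> \<in> Aff" and f: "f \<in> Hcarrier"
  shows "phi (\<rho> \<circ> \<sigma>) f = phi \<rho> (phi \<sigma> f :: idx \<Rightarrow> 'a::field)"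
proof -
  have fs: "finite (supp f)" using carrier_fin[OF f] by (simp add: fin_def)
  have "phi \<rho> (phi \<sigma> f) = (\<lambda>y. \<Sum>x\<in>supp f. f x * phi \<rho> (phib \<sigma> x) y)"
    unfolding phi_carrier_eq[of \<sigma>]
    by (rule linop_sum_scale[OF linop_phi fs]) auto
  also have "\<dots> = (\<lambda>y. \<Sum>x\<in>supp f. f x * phib (\<rho> \<circ> \<sigma>) x y)"
    by (rule ext, rule sum.cong[OF refl]) (simp add: phib_comp[OF A carrier_valid[OF f]])
  finally show ?thesis by (simp add: phi_def)
qed

lemma phib_id: "valid_idx x \<Longrightarrow> phib id x = (bvec x :: idx \<Rightarrow> 'a::field)"
  by (cases x) (auto simp: phib_IA phib_IS phib_IP ael_def sel_def valid_idx_def dsgn_id pel_def)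

lemma phi_id: assumes f: "f \<in> Hcarrier" shows "phi id f = (f :: idx \<Rightarrow> 'a::field)"
proof
  fix y
  have fs: "finite (supp f)" using carrier_fin[OF f] by (simp add: fin_def)
  have "phi id f y = (\<Sum>x\<in>supp f. f x * bvec x y)"
    unfolding phi_def by (rule sum.cong[OF refl]) (simp add: phib_id carrier_valid[OF f])
  also have "\<dots> = (\<Sum>x\<in>supp f. if x = y then f y else 0)"
    by (rule sum.cong) (auto simp: bvec_def)
  also have "\<dots> = f y" using fs by (simp add: supp_def)
  finally show "phi id f y = f y" .
qed

lemma phib_valid: assumes v: "valid_idx x" and nz: "phib \<rho> x y \<noteq> (0::'a::field)"
  shows "valid_idx y"
proof (cases x)
  case (IA i)
  then show ?thesis using nz by (auto simp: phib_IA ael_def bvec_def valid_idx_def split: if_splits)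
next
  case (IS j)
  then show ?thesis using nz v by (auto simp: phib_IS sel_def bvec_def valid_idx_def split: if_splits)
next
  case (IP r k)
  then show ?thesis using nz v by (auto simp: phib_IP pel_def bvec_def valid_idx_def split: if_splits)
qed

lemma phi_in_carrier: assumes f: "f \<in> Hcarrier" shows "phi \<rho> f \<in> (Hcarrier :: (idx \<Rightarrow> 'a::field) set)"
proof -
  have fs: "finite (supp f)" using carrier_fin[OF f] by (simp add: fin_def)
  have "fin (phi \<rho> f)" unfolding phi_carrier_eq by (rule fin_sum[OF fs]) auto
  moreover have "valid_idx y" if "phi \<rho> f y \<noteq> 0" for y
  proof -
    from that obtain x where x: "x \<in> supp f" "f x * phib \<rho> x y \<noteq> 0"
      unfolding phi_def using sum.not_neutral_contains_not_neutral by blast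
    then show ?thesis using phib_valid[OF carrier_valid[OF f x(1)]] by auto
  qed
  ultimately show ?thesis by (auto simp: Hcarrier_def fin_def)
qed

lemma phi_mult: assumes A: "\<rho> \<in> Aff" and f: "f \<in> Hcarrier" and g: "g \<in> Hcarrier"
  shows "phi \<rho> (hmult f g) = hmult (phi \<rho> f) (phi \<rho> (g :: idx \<Rightarrow> 'a::field))"
proof -
  have fs: "finite (supp f)" using carrier_fin[OF f] by (simp add: fin_def)
  have gs: "finite (supp g)" using carrier_fin[OF g] by (simp add: fin_def)
  have L: "phi \<rho> (hmult f g) = (\<lambda>y. \<Sum>x\<in>supp f. \<Sum>x'\<in>supp g. f x * g x' * phi \<rho> (bprod x x') y)"
  proof -
    have "phi \<rho> (hmult f g) = phi \<rho> (\<lambda>y. \<Sum>x\<in>supp f. (\<lambda>y. \<Sum>x'\<in>supp g. (f x * g x') * bprod x x' y) y)"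
      by (simp add: hmult_def)
    also have "\<dots> = (\<lambda>y. \<Sum>x\<in>supp f. phi \<rho> (\<lambda>y. \<Sum>x'\<in>supp g. (f x * g x') * bprod x x' y) y)"
      by (rule linop_sum[OF linop_phi fs]) (use gs in auto)
    also have "\<dots> = (\<lambda>y. \<Sum>x\<in>supp f. \<Sum>x'\<in>supp g. (f x * g x') * phi \<rho> (bprod x x') y)"
    proof (rule ext, rule sum.cong[OF refl])
      fix y x
      show "phi \<rho> (\<lambda>y. \<Sum>x'\<in>supp g. f x * g x' * bprod x x' y) y =
            (\<Sum>x'\<in>supp g. f x * g x' * phi \<rho> (bprod x x') y)"
        using fun_cong[OF linop_sum_scale[OF linop_phi[of \<rho>] gs, where u="\<lambda>x'. bprod x x'" and c="\<lambda>x'. f x * g x'"], of y]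
        by simp
    qed
    finally show ?thesis .
  qed
  have fp: "fin (phi \<rho> g)" using phi_in_carrier[OF g] carrier_fin by blast
  have R: "hmult (phi \<rho> f) (phi \<rho> g) = (\<lambda>y. \<Sum>x\<in>supp f. f x * (\<Sum>x'\<in>supp g. g x' * hmult (phib \<rho> x) (phib \<rho> x') y))"
  proof -
    have "hmult (phi \<rho> f) (phi \<rho> g) = (\<lambda>y. \<Sum>x\<in>supp f. f x * hmult (phib \<rho> x) (phi \<rho> g) y)"
      unfolding phi_carrier_eq[of \<rho> f]
      by (rule linop_sum_scale[OF linop_hmult_left[OF fp] fs]) auto
    also have "\<dots> = (\<lambda>y. \<Sum>x\<in>supp f. f x * (\<Sum>x'\<in>supp g. g x' * hmult (phib \<rho> x) (phib \<rho> x') y))"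
    proof (rule ext, rule sum.cong[OF refl])
      fix y x
      show "f x * hmult (phib \<rho> x) (phi \<rho> g) y =
            f x * (\<Sum>x'\<in>supp g. g x' * hmult (phib \<rho> x) (phib \<rho> x') y)"
        unfolding phi_carrier_eq[of \<rho> g]
        using fun_cong[OF linop_sum_scale[OF linop_hmult_right[OF fin_phib[of \<rho> x]] gs,
              where u="phib \<rho>" and c=g], of y]
        by simp
    qed
    finally show ?thesis .
  qed
  show ?thesis unfolding L R
  proof (rule ext, rule sum.cong[OF refl])
    fix y x assume x: "x \<in> supp f"
    have "(\<Sum>x'\<in>supp g. f x * g x' * phi \<rho> (bprod x x') y)
        = (\<Sum>x'\<in>supp g. f x * (g x' * hmult (phib \<rho> x) (phib \<rho> x') y))"
      by (rule sum.cong[OF refl]) (simp add: key[OF A carrier_valid[OF f x] carrier_valid[OF g]] mult.assoc)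
    also have "\<dots> = f x * (\<Sum>x'\<in>supp g. g x' * hmult (phib \<rho> x) (phib \<rho> x') y)"
      by (simp add: sum_distrib_left)
    finally show "(\<Sum>x'\<in>supp g. f x * g x' * phi \<rho> (bprod x x') y)
        = f x * (\<Sum>x'\<in>supp g. g x' * hmult (phib \<rho> x) (phib \<rho> x') y)" .
  qed
qed

lemma ael_carrier: "ael i \<in> Hcarrier"
  by (auto simp: Hcarrier_def ael_def bvec_def valid_idx_def supp_def)

lemma ael_inj: "ael a = (ael b :: idx \<Rightarrow> 'a::field) \<Longrightarrow> a = b"
proof -
  assume "ael a = (ael b :: idx \<Rightarrow> 'a)"
  then have "ael a (IA a) = (ael b (IA a) :: 'a)" by simp
  then show "a = b" by (auto simp: ael_def bvec_def split: if_splits)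
qed

lemma aut: assumes A: "\<rho> \<in> Aff" shows "is_hat_aut (phi \<rho> :: (idx \<Rightarrow> 'a::field) \<Rightarrow> idx \<Rightarrow> 'a)"
  unfolding is_hat_aut_def
proof (intro conjI ballI allI)
  obtain \<rho>' where r': "\<rho>' \<in> Aff" "\<rho>' \<circ> \<rho> = id" "\<rho> \<circ> \<rho>' = id" using Aff_inv[OF A] by blast
  show "bij_betw (phi \<rho>) (Hcarrier :: (idx \<Rightarrow> 'a) set) Hcarrier"
  proof (rule bij_betw_byWitness[where f'="phi \<rho>'"])
    show "\<forall>a\<in>(Hcarrier :: (idx \<Rightarrow> 'a) set). phi \<rho>' (phi \<rho> a) = a"
      using phi_comp[OF r'(1) A] phi_id r'(2) by metis
    show "\<forall>a\<in>(Hcarrier :: (idx \<Rightarrow> 'a) set). phi \<rho> (phi \<rho>' a) = a"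
      using phi_comp[OF A r'(1)] phi_id r'(3) by metis
    show "phi \<rho> ` (Hcarrier :: (idx \<Rightarrow> 'a) set) \<subseteq> Hcarrier" using phi_in_carrier by blast
    show "phi \<rho>' ` (Hcarrier :: (idx \<Rightarrow> 'a) set) \<subseteq> Hcarrier" using phi_in_carrier by blast
  qed
next
  fix f g :: "idx \<Rightarrow> 'a" assume f: "f \<in> Hcarrier" and g: "g \<in> Hcarrier"
  show "phi \<rho> (vadd f g) = vadd (phi \<rho> f) (phi \<rho> g)"
    unfolding vadd_def by (rule phi_add[OF carrier_fin[OF f] carrier_fin[OF g]])
  show "phi \<rho> (hmult f g) = hmult (phi \<rho> f) (phi \<rho> g)" by (rule phi_mult[OF A f g])
next
  fix c and f :: "idx \<Rightarrow> 'a" assume f: "f \<in> Hcarrier"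
  show "phi \<rho> (vsc c f) = vsc c (phi \<rho> f)"
    unfolding vsc_def by (rule phi_scale[OF carrier_fin[OF f]])
qed

theorem proposition3p5:
  assumes char: "(2::'a::field) \<noteq> 0"
  shows "(\<forall>\<rho>\<in>Dinf. is_hat_aut (phi \<rho> :: (idx \<Rightarrow> 'a) \<Rightarrow> idx \<Rightarrow> 'a))
       \<and> (\<forall>\<rho>\<in>Dinf. \<forall>\<sigma>\<in>Dinf. \<forall>f\<in>(Hcarrier :: (idx \<Rightarrow> 'a) set).
            phi (\<rho> \<circ> \<sigma>) f = phi \<rho> (phi \<sigma> f))
       \<and> (\<forall>\<rho>\<in>Dinf. \<forall>\<sigma>\<in>Dinf.
            (\<forall>f\<in>(Hcarrier :: (idx \<Rightarrow> 'a) set). phi \<rho> f = phi \<sigma> f) \<longrightarrow> \<rho> = \<sigma>)"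
proof (intro conjI ballI impI)
  fix \<rho> assume "\<rho> \<in> Dinf"
  then show "is_hat_aut (phi \<rho> :: (idx \<Rightarrow> 'a) \<Rightarrow> idx \<Rightarrow> 'a)" by (rule aut[OF Dinf_Aff])
next
  fix \<rho> \<sigma> and f :: "idx \<Rightarrow> 'a" assume "\<rho> \<in> Dinf" "\<sigma> \<in> Dinf" "f \<in> Hcarrier"
  then show "phi (\<rho> \<circ> \<sigma>) f = phi \<rho> (phi \<sigma> f)" by (intro phi_comp Dinf_Aff)
next
  fix \<rho> \<sigma> assume "\<rho> \<in> Dinf" "\<sigma> \<in> Dinf"
    and h: "\<forall>f\<in>(Hcarrier :: (idx \<Rightarrow> 'a) set). phi \<rho> f = phi \<sigma> f"
  show "\<rho> = \<sigma>"
  proof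
    fix i
    have "phi \<rho> (ael i) = (phi \<sigma> (ael i) :: idx \<Rightarrow> 'a)" using h ael_carrier by blast
    then have "ael (\<rho> i) = (ael (\<sigma> i) :: idx \<Rightarrow> 'a)" by (simp add: phi_ael)
    then show "\<rho> i = \<sigma> i" by (rule ael_inj)
  qed
qed


end
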